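(* Let $n\ge16$ be such that $K=n/\log_2n$ is an integer, let $0\le c<1$, $0<\delta\le q$ with $K(1-c)\ge16\ln n$, and let $\mathbf A(\lambda)=\begin{bmatrix}0&1-\delta\lambda\\-c&1+c-q\lambda\end{bmatrix}$. If $\lambda\ge\frac{4(1-c)\ln n}{(q-c\delta)K}$, $\delta\lambda\le1$ and $q\lambda\le1+c$, then $$\|\mathbf A^K(\lambda)\|\le\frac{\sqrt6}{n^2\log_2n}\le1.$$
   Context: $\|\cdot\|$ denotes the spectral norm. *)

theory Defs
  imports "HOL-Analysis.Analysis"
begin

primrec matpow :: "real^'n^'n \<Rightarrow> nat \<Rightarrow> real^'n^'n" where
  "matpow A 0 = mat 1"
| "matpow A (Suc k) = A ** matpow A k"

definition spec_norm :: "real^'n^'n \<Rightarrow> real" where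
  "spec_norm A = onorm (\<lambda>x. A *v x)"

definition Amat :: "real \<Rightarrow> real \<Rightarrow> real \<Rightarrow> real \<Rightarrow> real^2^2" where
  "Amat c \<delta> q t = vector [vector [0, 1 - \<delta> * t], vector [- c, 1 + c - q * t]]"

end

theory Submission
  imports Defs
begin
fun useq :: "real \<Rightarrow> real \<Rightarrow> nat \<Rightarrow> real" where
  "useq b p 0 = 0"
| "useq b p (Suc 0) = 1"
| "useq b p (Suc (Suc k)) = b * useq b p (Suc k) - p * useq b p k"

fun wseq :: "complex \<Rightarrow> complex \<Rightarrow> nat \<Rightarrow> complex" where
  "wseq z1 z2 0 = 0"
| "wseq z1 z2 (Suc k) = z1 ^ k + z2 * wseq z1 z2 k"

lemma useq_wseq:
  assumes "z1 + z2 = of_real b" "z1 * z2 = of_real p"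
  shows "of_real (useq b p k) = wseq z1 z2 k"
proof -
  have "of_real (useq b p k) = wseq z1 z2 k \<and> of_real (useq b p (Suc k)) = wseq z1 z2 (Suc k)"
  proof (induction k)
    case 0 then show ?case by simp
  next
    case (Suc k)
    then have h: "of_real (useq b p k) = wseq z1 z2 k" "of_real (useq b p (Suc k)) = wseq z1 z2 (Suc k)" by auto
    have "of_real (useq b p (Suc (Suc k))) = of_real b * of_real (useq b p (Suc k)) - of_real p * (of_real (useq b p k)::complex)"
      by simp
    also have "\<dots> = wseq z1 z2 (Suc (Suc k))"
      unfolding h assms(1,2)[symmetric] by (simp add: algebra_simps)
    finally show ?case using h by simp
  qed
  then show ?thesis by simp
qed

lemma wseq_bound:
  assumes "cmod z1 \<le> r" "cmod z2 \<le> r"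
  shows "cmod (wseq z1 z2 k) \<le> real k * r ^ (k - 1)"
proof (induction k)
  case 0 then show ?case by simp
next
  case (Suc k)
  have r0: "0 \<le> r" using assms norm_ge_zero order_trans by blast
  show ?case
  proof (cases k)
    case 0 then show ?thesis by simp
  next
    case (Suc m)
    have "cmod (wseq z1 z2 (Suc k)) \<le> cmod (z1 ^ k) + cmod z2 * cmod (wseq z1 z2 k)"
      by (simp add: norm_triangle_le norm_mult)
    also have "\<dots> \<le> r ^ k + r * (real k * r ^ (k - 1))"
      by (intro add_mono mult_mono Suc.IH) (auto simp: norm_power power_mono assms r0)
    also have "\<dots> = real (Suc k) * r ^ (Suc k - 1)"
      using Suc by (simp add: algebra_simps)
    finally show ?thesis .
  qed
qed

lemma roots_exist:
  fixes b p r :: real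
  assumes "0 \<le> r" "b \<le> 2 * r" "p \<le> r^2" "0 \<le> r^2 - b * r + p" "0 \<le> b"
  shows "\<exists>z1 z2::complex. z1 + z2 = of_real b \<and> z1 * z2 = of_real p \<and> cmod z1 \<le> r \<and> cmod z2 \<le> r"
proof (cases "4 * p \<le> b^2")
  case True
  define d where "d = sqrt (b^2 - 4*p)"
  have d0: "0 \<le> d" and dd: "d^2 = b^2 - 4*p" using True by (auto simp: d_def)
  have "d \<le> 2*r - b"
  proof -
    have eq: "(2 * r - b)^2 = d^2 + 4 * (r^2 - b * r + p)" using dd by algebra
    have "0 \<le> 4 * (r^2 - b * r + p)" using assms(4) by (rule mult_nonneg_nonneg[rotated]) simp
    then have "d^2 \<le> (2*r - b)^2" unfolding eq by (rule le_add_same_cancel1[THEN iffD2])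
    moreover have "0 \<le> 2*r - b" using assms(2) by linarith
    ultimately show ?thesis by (rule power2_le_imp_le)
  qed
  then have h1a: "\<bar>(b + d)/2\<bar> \<le> r" using d0 assms(5) assms(1)
    by (simp add: abs_le_iff field_simps)
  have h1b: "\<bar>(b - d)/2\<bar> \<le> r" using \<open>d \<le> 2*r - b\<close> d0 assms(5)
    by (simp add: abs_le_iff field_simps)
  note h1 = h1a h1b
  show ?thesis
    apply (rule exI[of _ "of_real ((b + d)/2)"], rule exI[of _ "of_real ((b - d)/2)"])
  proof (intro conjI)
    show "complex_of_real ((b + d) / 2) + complex_of_real ((b - d) / 2) = complex_of_real b"
    proof -
      have "(b + d) / 2 + (b - d) / 2 = b" by (simp add: field_simps)
      then show ?thesis by (metis of_real_add)
    qed
    have "(b + d) * (b - d) = 4 * p" using dd by algebra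
    then have "(b + d) / 2 * ((b - d) / 2) = p" by simp
    then show "complex_of_real ((b + d) / 2) * complex_of_real ((b - d) / 2) = complex_of_real p"
      by (metis of_real_mult)
  qed (simp_all only: norm_of_real h1)
next
  case False
  define e where "e = sqrt (4*p - b^2)"
  have ee: "e^2 = 4*p - b^2" using False by (simp add: e_def)
  have p0: "0 \<le> p" using False by (smt (verit) zero_le_power2)
  have c1: "cmod (Complex (b/2) (e/2)) = sqrt p" "cmod (Complex (b/2) (-e/2)) = sqrt p"
    using ee by (simp_all add: cmod_def power2_eq_square algebra_simps power_divide)
  have sp: "sqrt p \<le> r" using real_sqrt_le_mono[OF assms(3)] assms(1) by simp
  show ?thesis
    apply (rule exI[of _ "Complex (b/2) (e/2)"], rule exI[of _ "Complex (b/2) (-e/2)"])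
    using c1 sp ee by (auto simp: complex_eq_iff power2_eq_square algebra_simps)
qed
lemma matpow_CH:
  fixes A :: "real^2^2"
  defines "b \<equiv> A$1$1 + A$2$2" and "p \<equiv> A$1$1 * A$2$2 - A$1$2 * A$2$1"
  shows "matpow A (Suc k) = (\<chi> i j. useq b p (Suc k) * A$i$j - (if i = j then p * useq b p k else 0))"
proof (induction k)
  case 0
  show ?case by (simp add: vec_eq_iff forall_2 matrix_matrix_mult_def sum_2 mat_def)
next
  case (Suc k)
  have "matpow A (Suc (Suc k)) = A ** matpow A (Suc k)" by simp
  also have "\<dots> = A ** (\<chi> i j. useq b p (Suc k) * A$i$j - (if i = j then p * useq b p k else 0))"
    using Suc by simp
  also have "\<dots> = (\<chi> i j. useq b p (Suc (Suc k)) * A$i$j - (if i = j then p * useq b p (Suc k) else 0))"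
    by (simp add: vec_eq_iff forall_2 matrix_matrix_mult_def sum_2 b_def p_def algebra_simps)
  finally show ?case .
qed

lemma spec_norm_le:
  fixes M :: "real^2^2"
  shows "spec_norm M \<le> \<bar>M$1$1\<bar> + \<bar>M$1$2\<bar> + \<bar>M$2$1\<bar> + \<bar>M$2$2\<bar>"
  unfolding spec_norm_def
proof (rule onorm_le)
  fix x :: "real^2"
  have "norm (M *v x) \<le> \<bar>(M *v x)$1\<bar> + \<bar>(M *v x)$2\<bar>"
    using norm_le_l1_cart[of "M *v x"] by (simp add: sum_2)
  also have "\<dots> \<le> (\<bar>M$1$1\<bar> + \<bar>M$1$2\<bar> + \<bar>M$2$1\<bar> + \<bar>M$2$2\<bar>) * norm x"
  proof -
    have h1: "\<bar>x$1\<bar> \<le> norm x" "\<bar>x$2\<bar> \<le> norm x" by (rule component_le_norm_cart)+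
    have "\<bar>(M *v x)$1\<bar> + \<bar>(M *v x)$2\<bar> \<le> \<bar>M$1$1\<bar>*\<bar>x$1\<bar> + \<bar>M$1$2\<bar>*\<bar>x$2\<bar> + \<bar>M$2$1\<bar>*\<bar>x$1\<bar> + \<bar>M$2$2\<bar>*\<bar>x$2\<bar>"
      by (simp add: matrix_vector_mult_def sum_2 abs_mult[symmetric])
    also have "\<dots> \<le> \<bar>M$1$1\<bar>*norm x + \<bar>M$1$2\<bar>*norm x + \<bar>M$2$1\<bar>*norm x + \<bar>M$2$2\<bar>*norm x"
      by (intro add_mono mult_left_mono h1) auto
    finally show ?thesis by (simp add: algebra_simps)
  qed
  finally show "norm (M *v x) \<le> (\<bar>M$1$1\<bar> + \<bar>M$1$2\<bar> + \<bar>M$2$1\<bar> + \<bar>M$2$2\<bar>) * norm x" .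
qed

lemma useq_bound:
  assumes "0 \<le> r" "b \<le> 2 * r" "p \<le> r^2" "0 \<le> r^2 - b * r + p" "0 \<le> b"
  shows "\<bar>useq b p k\<bar> \<le> real k * r ^ (k - 1)"
proof -
  obtain z1 z2 :: complex where z: "z1 + z2 = of_real b" "z1 * z2 = of_real p" "cmod z1 \<le> r" "cmod z2 \<le> r"
    using roots_exist[OF assms] by blast
  have "\<bar>useq b p k\<bar> = cmod (of_real (useq b p k))" by simp
  also have "\<dots> = cmod (wseq z1 z2 k)" using useq_wseq[OF z(1,2)] by simp
  also have "\<dots> \<le> real k * r ^ (k - 1)" by (rule wseq_bound[OF z(3,4)])
  finally show ?thesis .
qed

theorem mainTheorem13:
  fixes n K :: nat and c \<delta> q lam :: real
  assumes "n \<ge> 16"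
    and "real K = real n / log 2 (real n)"
    and "0 \<le> c" "c < 1"
    and "0 < \<delta>" "\<delta> \<le> q"
    and "real K * (1 - c) \<ge> 16 * ln (real n)"
    and "lam \<ge> 4 * (1 - c) * ln (real n) / ((q - c * \<delta>) * real K)"
    and "\<delta> * lam \<le> 1"
    and "q * lam \<le> 1 + c"
  shows "spec_norm (matpow (Amat c \<delta> q lam) K) \<le> sqrt 6 / (real n ^ 2 * log 2 (real n))
       \<and> sqrt 6 / (real n ^ 2 * log 2 (real n)) \<le> 1"
proof -
  define L where "L = ln (real n)"
  define lg where "lg = log 2 (real n)"
  have n16: "16 \<le> real n" using assms(1) by simp
  have lg4: "4 \<le> lg"
  proof -
    have "log 2 (16::real) = 4"
    proof -
      have "log 2 ((2::real) ^ 4) = 4" using log_pow_cancel[of "2::real" 4] by simp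
      then show ?thesis by simp
    qed
    moreover have "log 2 (16::real) \<le> log 2 (real n)" using n16 by simp
    ultimately show ?thesis unfolding lg_def by simp
  qed
  have L1: "1 \<le> L"
  proof -
    have "ln (16::real) = 4 * ln 2"
    proof -
      have "(16::real) = 2 ^ 4" by simp
      then show ?thesis by (metis ln_realpow of_nat_numeral)
    qed
    moreover have "ln (16::real) \<le> L" unfolding L_def using n16 by simp
    moreover have "2/3 \<le> ln (2::real)" by (rule ln2_ge_two_thirds)
    ultimately show ?thesis by linarith
  qed
  have Kdef: "real K * lg = real n" using assms(2) lg4 unfolding lg_def by simp
  have Kpos: "0 < real K"
  proof (rule ccontr)
    assume "\<not> 0 < real K"
    then have "real K = 0" by simp
    then show False using Kdef n16 by simp
  qed
  have hK: "16 * L \<le> real K * (1 - c)" using assms(7) unfolding L_def .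
  have K16: "16 \<le> real K"
  proof -
    have "real K * (1 - c) \<le> real K" using assms(3) Kpos by (simp add: mult_le_cancel_left1)
    then show ?thesis using hK L1 by linarith
  qed
  have n64: "64 \<le> real n"
  proof -
    have "16 * 4 \<le> real K * lg" using K16 lg4 by (intro mult_mono) auto
    then show ?thesis using Kdef by simp
  qed
  define t where "t = 4 * L / real K"
  have tK: "t * real K = 4 * L" unfolding t_def using Kpos by simp
  have t0: "0 < t" unfolding t_def using Kpos L1 by simp
  have t4: "4 * t \<le> 1 - c"
  proof -
    have e: "real K * (4 * t) = 16 * L" using tK by simp
    have "real K * (4 * t) \<le> real K * (1 - c)" unfolding e by (rule hK)
    then show ?thesis using Kpos by simp
  qed
  define Q where "Q = q * lam"
  define D where "D = \<delta> * lam"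
  have qcd: "0 < q - c * \<delta>"
  proof -
    have "c * \<delta> < \<delta>" using assms(4,5) by simp
    then show ?thesis using assms(6) by linarith
  qed
  have lam_ge: "(1 - c) * t / (q - c * \<delta>) \<le> lam"
  proof -
    have "4 * (1 - c) * ln (real n) / ((q - c * \<delta>) * real K) = (1 - c) * t / (q - c * \<delta>)"
      unfolding t_def L_def by (simp add: field_simps)
    then show ?thesis using assms(8) by simp
  qed
  have lam0: "0 \<le> lam"
  proof -
    have "0 \<le> (1 - c) * t / (q - c * \<delta>)" using assms(4) t0 qcd by simp
    then show ?thesis using lam_ge by linarith
  qed
  have s: "(1 - c) * t \<le> Q - c * D"
  proof -
    have "(1 - c) * t \<le> lam * (q - c * \<delta>)" using lam_ge qcd by (simp add: field_simps)
    moreover have "lam * (q - c * \<delta>) = Q - c * D" unfolding Q_def D_def by algebra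
    ultimately show ?thesis by simp
  qed
  have DQ: "D \<le> Q" unfolding D_def Q_def using assms(6) lam0 by (simp add: mult_right_mono)
  have D0: "0 \<le> D" unfolding D_def using assms(5) lam0 by simp
  have D1: "D \<le> 1" unfolding D_def using assms(9) .
  have Q1: "Q \<le> 1 + c" unfolding Q_def using assms(10) .
  define r where "r = 1 - t"
  define b where "b = 1 + c - Q"
  define p where "p = (1 - D) * c"
  have r0: "0 \<le> r" unfolding r_def using t4 assms(3) by linarith
  have r1: "r \<le> 1" unfolding r_def using t0 by linarith
  have b0: "0 \<le> b" unfolding b_def using Q1 by linarith
  have b2: "b \<le> 2" unfolding b_def using Q1 DQ D0 assms(4) by linarith
  have p0: "0 \<le> p" unfolding p_def using D1 assms(3) by simp
  have p1: "p \<le> c"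
  proof -
    have "0 \<le> D * c" using D0 assms(3) by simp
    moreover have "p = c - D * c" unfolding p_def by algebra
    ultimately show ?thesis by linarith
  qed
  have c1: "b \<le> 2 * r"
  proof -
    have "2 * r = 2 - 2 * t" unfolding r_def by simp
    then show ?thesis unfolding b_def using t4 t0 DQ D0 by linarith
  qed
  have c2: "p \<le> r^2"
  proof -
    have "r^2 = 1 - 2 * t + t^2" unfolding r_def by algebra
    moreover have "0 \<le> t^2" by simp
    ultimately have "1 - 2 * t \<le> r^2" by linarith
    then show ?thesis using p1 t4 t0 by linarith
  qed
  have c3: "0 \<le> r^2 - b * r + p"
  proof -
    have eq: "r^2 - b * r + p = Q * (1 - t) - c * D - (1 - c) * t + t^2"
      unfolding r_def b_def p_def by algebra
    show ?thesis
    proof (cases "t \<le> Q")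
      case True
      have "c * D \<le> c * Q" using DQ assms(3) by (simp add: mult_left_mono)
      moreover have "0 \<le> (Q - t) * (1 - c - t)" using True t4 t0 by simp
      moreover have "(Q - t) * (1 - c - t) = Q * (1 - t) - c * Q - (1 - c) * t + t^2"
        by algebra
      ultimately show ?thesis unfolding eq by linarith
    next
      case False
      have "0 \<le> t * (t - Q)" using False t0 by simp
      moreover have "t * (t - Q) = Q * (1 - t) - (Q - (1 - c) * t) - (1 - c) * t + t^2"
        by algebra
      ultimately show ?thesis unfolding eq using s by linarith
    qed
  qed
  note ub = useq_bound[OF r0 c1 c2 c3 b0]
  define A where "A = Amat c \<delta> q lam"
  have A11: "A$1$1 = 0" and A12: "A$1$2 = 1 - D" and A21: "A$2$1 = - c" and A22: "A$2$2 = b"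
    unfolding A_def Amat_def D_def b_def Q_def by simp_all
  obtain m where Km: "K = Suc m" using Kpos by (cases K) auto
  have bp: "A$1$1 + A$2$2 = b" "A$1$1 * A$2$2 - A$1$2 * A$2$1 = p"
    unfolding A11 A12 A21 A22 p_def by simp_all
  define u where "u = useq b p (Suc m)"
  define v where "v = useq b p m"
  have M: "matpow A K = (\<chi> i j. u * A$i$j - (if i = j then p * v else 0))"
    unfolding Km u_def v_def using matpow_CH[of A m] unfolding bp .
  have sn: "spec_norm (matpow A K) \<le> 4 * \<bar>u\<bar> + 2 * \<bar>v\<bar>"
  proof -
    have "spec_norm (matpow A K) \<le> \<bar>p * v\<bar> + \<bar>u * (1 - D)\<bar> + \<bar>u * c\<bar> + \<bar>u * b - p * v\<bar>"
      using spec_norm_le[of "matpow A K"] unfolding M by (simp add: A11 A12 A21 A22)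
    also have "\<dots> \<le> \<bar>v\<bar> + \<bar>u\<bar> + \<bar>u\<bar> + (2 * \<bar>u\<bar> + \<bar>v\<bar>)"
    proof -
      have pv: "\<bar>p * v\<bar> \<le> \<bar>v\<bar>" using p0 p1 assms(4) by (simp add: abs_mult mult_left_le_one_le)
      have "\<bar>u * (1 - D)\<bar> \<le> \<bar>u\<bar>" using D0 D1 by (simp add: abs_mult mult_left_le)
      moreover have "\<bar>u * c\<bar> \<le> \<bar>u\<bar>" using assms(3,4) by (simp add: abs_mult mult_left_le)
      moreover have "\<bar>u * b - p * v\<bar> \<le> 2 * \<bar>u\<bar> + \<bar>v\<bar>"
      proof -
        have e1: "\<bar>u * b\<bar> = \<bar>u\<bar> * b" using b0 by (simp add: abs_mult)
        have "\<bar>u\<bar> * b \<le> \<bar>u\<bar> * 2" by (rule mult_left_mono[OF b2]) simp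
        then have "\<bar>u * b\<bar> \<le> 2 * \<bar>u\<bar>" unfolding e1 by simp
        then show ?thesis using pv by (smt (verit))
      qed
      ultimately show ?thesis using pv by linarith
    qed
    finally show ?thesis by linarith
  qed
  have main: "4 * \<bar>u\<bar> + 2 * \<bar>v\<bar> \<le> 6 * real K * r ^ (K - 2)"
  proof -
    have Km2: "K - 2 = m - 1" using Km by simp
    have hu: "\<bar>u\<bar> \<le> real (Suc m) * r ^ m" using ub[of "Suc m"] unfolding u_def by simp
    have hv: "\<bar>v\<bar> \<le> real m * r ^ (m - 1)" using ub[of m] unfolding v_def by simp
    have rr: "r ^ m \<le> r ^ (m - 1)" using r0 r1 by (intro power_decreasing) auto
    have rp: "0 \<le> r ^ (m - 1)" using r0 by simp
    have "real (Suc m) * r ^ m \<le> real K * r ^ (m - 1)" unfolding Km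
      by (rule mult_left_mono[OF rr]) simp
    moreover have "real m * r ^ (m - 1) \<le> real K * r ^ (m - 1)" unfolding Km
      by (rule mult_right_mono[OF _ rp]) simp
    ultimately have "4 * \<bar>u\<bar> + 2 * \<bar>v\<bar> \<le> 6 * (real K * r ^ (m - 1))" using hu hv by linarith
    then show ?thesis unfolding Km2 by (simp add: mult.assoc)
  qed
  have fin: "6 * real K * r ^ (K - 2) \<le> sqrt 6 / (real n ^ 2 * lg)"
  proof -
    have npos: "0 < real n" using n16 by simp
    have rexp: "r \<le> exp (- t)" using exp_ge_add_one_self[of "- t"] unfolding r_def by simp
    have p1: "r ^ (K - 2) \<le> exp (- t) ^ (K - 2)" by (rule power_mono[OF rexp r0])
    have p2: "exp (- t) ^ (K - 2) = exp (real (K - 2) * (- t))" by (rule exp_of_nat_mult[symmetric])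
    have K2: "2 \<le> K" using K16 by simp
    have rK2: "real (K - 2) = real K - 2" using K2 by (simp add: of_nat_diff)
    have X: "real (K - 2) * t = 4 * L - 2 * t"
    proof -
      have "real (K - 2) * t = real K * t - 2 * t" unfolding rK2 by (simp add: left_diff_distrib)
      moreover have "real K * t = 4 * L" using tK by (simp add: mult.commute)
      ultimately show ?thesis by simp
    qed
    have t_le: "4 * t \<le> L"
    proof -
      have "16 * t \<le> real K * t" by (rule mult_right_mono[OF K16]) (use t0 in simp)
      moreover have "real K * t = 4 * L" using tK by (simp add: mult.commute)
      ultimately show ?thesis by linarith
    qed
    have L36: "2 * ln 6 \<le> L"
    proof -
      have "ln ((6::real) ^ 2) = 2 * ln 6" by (metis ln_realpow of_nat_numeral)
      moreover have "ln ((6::real) ^ 2) \<le> L" unfolding L_def using n64 by simp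
      ultimately show ?thesis by simp
    qed
    have Xge: "ln 6 + 3 * L \<le> real (K - 2) * t" unfolding X using t_le L36 by linarith
    have lnN: "ln (6 * real n ^ 3) = ln 6 + 3 * L"
    proof -
      have "ln (6 * real n ^ 3) = ln 6 + ln (real n ^ 3)" by (rule ln_mult_pos) (use npos in simp_all)
      moreover have "ln (real n ^ 3) = 3 * ln (real n)" by (metis ln_realpow of_nat_numeral)
      ultimately show ?thesis unfolding L_def by simp
    qed
    have neg: "real (K - 2) * (- t) = - (real (K - 2) * t)" by simp
    have "r ^ (K - 2) \<le> exp (- t) ^ (K - 2)" by (rule p1)
    also have "\<dots> = exp (real (K - 2) * (- t))" by (rule p2)
    also have "\<dots> \<le> exp (- ln (6 * real n ^ 3))"
      unfolding neg lnN exp_le_cancel_iff using Xge by linarith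
    also have "\<dots> = 1 / (6 * real n ^ 3)"
    proof -
      have e: "exp (ln (6 * real n ^ 3)) = 6 * real n ^ 3" using npos by simp
      have "exp (- ln (6 * real n ^ 3)) = inverse (exp (ln (6 * real n ^ 3)))" by (rule exp_minus)
      then show ?thesis unfolding e by (simp add: inverse_eq_divide)
    qed
    finally have rK: "r ^ (K - 2) \<le> 1 / (6 * real n ^ 3)" .
    have "6 * real K * r ^ (K - 2) \<le> 6 * real K * (1 / (6 * real n ^ 3))"
      by (rule mult_left_mono[OF rK]) simp
    also have "\<dots> = real K / real n ^ 3" by simp
    also have "\<dots> \<le> sqrt 6 * real K / real n ^ 3"
    proof -
      have "1 \<le> sqrt (6::real)" by simp
      then have "real K \<le> sqrt 6 * real K" using Kpos by simp
      then show ?thesis using npos by (simp add: divide_right_mono)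
    qed
    also have "\<dots> = sqrt 6 / (real n ^ 2 * lg)"
    proof -
      have lgK: "lg = real n / real K" using Kdef Kpos by (simp add: field_simps)
      have "real n ^ 2 * (real n / real K) = real n ^ 3 / real K"
        by (simp add: power2_eq_square power3_eq_cube)
      then show ?thesis unfolding lgK by (simp, metis)
    qed
    finally show ?thesis .
  qed
  have second: "sqrt 6 / (real n ^ 2 * lg) \<le> 1"
  proof -
    have "sqrt 6 \<le> sqrt ((3::real)^2)" unfolding real_sqrt_le_iff by simp
    then have "sqrt 6 \<le> 3" by simp
    moreover have "3 \<le> real n ^ 2 * lg"
    proof -
      have "1 \<le> real n ^ 2" using n16 by (intro one_le_power) simp
      then have "1 * 4 \<le> real n ^ 2 * lg" using lg4 by (intro mult_mono) auto
      then show ?thesis by simp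
    qed
    ultimately have "sqrt 6 \<le> real n ^ 2 * lg" by linarith
    moreover have "0 < real n ^ 2 * lg" using \<open>3 \<le> real n ^ 2 * lg\<close> by linarith
    ultimately show ?thesis by (simp add: divide_le_eq_1_pos)
  qed
  show ?thesis using sn main fin second unfolding A_def lg_def by linarith
qed

end
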